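(* Let $\alpha\in(1,2)$ and let $p\ge2$, $n\ge1$ be integers. Then the matrix $R_n^{p,\alpha}:=n^{-\alpha}A_n^{p,\alpha}-T_n^{p,\alpha}$ has rank at most $4(p-1)$.
   Context: Knots: $\xi_1=\dots=\xi_{p+1}=0$, $\xi_{i+p+1}=i/n$ ($i=0,\dots,n$), $\xi_{p+n+1}=\dots=\xi_{2p+n+1}=1$. B-splines: $N^0_i=\mathbf 1_{[\xi_i,\xi_{i+1})}$, $N^k_i(x)=\frac{x-\xi_i}{\xi_{i+k}-\xi_i}N^{k-1}_i(x)+\frac{\xi_{i+k+1}-x}{\xi_{i+k+1}-\xi_{i+1}}N^{k-1}_{i+1}(x)$ (zero-denominator fractions are zero). Greville abscissae $\eta_i=\frac{\xi_{i+1}+\dots+\xi_{i+p}}{p}$. On $[0,1]$: $D^\alpha_{0,x}u(x)=\frac{1}{\Gamma(2-\alpha)}\frac{d^2}{dx^2}\int_0^x(x-y)^{1-\alpha}u(y)dy$, $D^\alpha_{x,1}u(x)=\frac{1}{\Gamma(2-\alpha)}\frac{d^2}{dx^2}\int_x^1(y-x)^{1-\alpha}u(y)dy$. $A_n^{p,\alpha}=\frac{1}{2\cos(\pi\alpha/2)}(A_n^L+A_n^R)$ with $(A_n^L)_{i,j}=D^\alpha_{0,x}N^p_{j+1}(\eta_{i+1})$, $(A_n^R)_{i,j}=D^\alpha_{x,1}N^p_{j+1}(\eta_{i+1})$, $i,j=1,\dots,n+p-2$. The cardinal B-spline $\phi_p$: $\phi_0=\mathbf 1_{[0,1)}$, $\phi_p(t)=\frac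 tp\phi_{p-1}(t)+\frac{p+1-t}{p}\phi_{p-1}(t-1)$. On $\mathbb R$: $D^{\alpha}_{-\infty,x}u(x)=\frac{1}{\Gamma(2-\alpha)}\frac{d^2}{dx^2}\int_{-\infty}^x (x-y)^{1-\alpha}u(y)dy$, $D^{\alpha}_{x,+\infty}u(x)=\frac{1}{\Gamma(2-\alpha)}\frac{d^2}{dx^2}\int_x^{+\infty}(y-x)^{1-\alpha}u(y)dy$. $T_n^{p,\alpha}$ is the $(n+p-2)\times(n+p-2)$ matrix with $(i,j)$ entry $\frac{1}{2\cos(\pi\alpha/2)}\big(D^{\alpha}_{-\infty,x}\phi_p(\frac{p+1}{2}+i-j)+D^{\alpha}_{x,+\infty}\phi_p(\frac{p+1}{2}+i-j)\big)$. *)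

theory Defs
  imports "HOL-Analysis.Analysis" "Jordan_Normal_Form.DL_Rank"
begin

text \<open>Open uniform knot vector with p+1 repeated end knots, indices 1..2p+n+1.\<close>
definition knot :: "nat \<Rightarrow> nat \<Rightarrow> nat \<Rightarrow> real" where
  "knot p n k = (if k \<le> p + 1 then 0
                 else if k \<ge> p + n + 1 then 1
                 else real (k - (p + 1)) / real n)"

definition frac0 :: "real \<Rightarrow> real \<Rightarrow> real" where
  "frac0 a b = (if b = 0 then 0 else a / b)"

fun bspline :: "nat \<Rightarrow> nat \<Rightarrow> nat \<Rightarrow> nat \<Rightarrow> real \<Rightarrow> real" where
  "bspline p n 0 i x = (if knot p n i \<le> x \<and> x < knot p n (i + 1) then 1 else 0)"
| "bspline p n (Suc k) i x =
     frac0 (x - knot p n i) (knot p n (i + Suc k) - knot p n i) * bspline p n k i x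
   + frac0 (knot p n (i + Suc k + 1) - x) (knot p n (i + Suc k + 1) - knot p n (i + 1))
       * bspline p n k (i + 1) x"

definition greville :: "nat \<Rightarrow> nat \<Rightarrow> nat \<Rightarrow> real" where
  "greville p n i = (\<Sum>k = i + 1..i + p. knot p n k) / real p"

definition frac_deriv_left01 :: "real \<Rightarrow> (real \<Rightarrow> real) \<Rightarrow> real \<Rightarrow> real" where
  "frac_deriv_left01 \<alpha> u x = (1 / Gamma (2 - \<alpha>)) *
     deriv (deriv (\<lambda>t. integral {0..t} (\<lambda>y. (t - y) powr (1 - \<alpha>) * u y))) x"

definition frac_deriv_right01 :: "real \<Rightarrow> (real \<Rightarrow> real) \<Rightarrow> real \<Rightarrow> real" where
  "frac_deriv_right01 \<alpha> u x = (1 / Gamma (2 - \<alpha>)) *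
     deriv (deriv (\<lambda>t. integral {t..1} (\<lambda>y. (y - t) powr (1 - \<alpha>) * u y))) x"

definition frac_deriv_left_R :: "real \<Rightarrow> (real \<Rightarrow> real) \<Rightarrow> real \<Rightarrow> real" where
  "frac_deriv_left_R \<alpha> u x = (1 / Gamma (2 - \<alpha>)) *
     deriv (deriv (\<lambda>t. integral {..t} (\<lambda>y. (t - y) powr (1 - \<alpha>) * u y))) x"

definition frac_deriv_right_R :: "real \<Rightarrow> (real \<Rightarrow> real) \<Rightarrow> real \<Rightarrow> real" where
  "frac_deriv_right_R \<alpha> u x = (1 / Gamma (2 - \<alpha>)) *
     deriv (deriv (\<lambda>t. integral {t..} (\<lambda>y. (y - t) powr (1 - \<alpha>) * u y))) x"

fun cardinal_bspline :: "nat \<Rightarrow> real \<Rightarrow> real" where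
  "cardinal_bspline 0 t = (if 0 \<le> t \<and> t < 1 then 1 else 0)"
| "cardinal_bspline (Suc p) t =
     t / real (Suc p) * cardinal_bspline p t
   + (real (Suc p) + 1 - t) / real (Suc p) * cardinal_bspline p (t - 1)"

text \<open>The matrices, of size (n+p-2) x (n+p-2); JNF matrices are 0-indexed, so the
  paper's entry (i,j) is stored at position (i-1,j-1).\<close>
definition A_mat :: "nat \<Rightarrow> real \<Rightarrow> nat \<Rightarrow> real Matrix.mat" where
  "A_mat p \<alpha> n = Matrix.mat (n + p - 2) (n + p - 2) (\<lambda>(i, j).
     1 / (2 * cos (pi * \<alpha> / 2)) *
       (frac_deriv_left01 \<alpha> (bspline p n p (j + 2)) (greville p n (i + 2))
      + frac_deriv_right01 \<alpha> (bspline p n p (j + 2)) (greville p n (i + 2))))"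

definition T_mat :: "nat \<Rightarrow> real \<Rightarrow> nat \<Rightarrow> real Matrix.mat" where
  "T_mat p \<alpha> n = Matrix.mat (n + p - 2) (n + p - 2) (\<lambda>(i, j).
     1 / (2 * cos (pi * \<alpha> / 2)) *
       (frac_deriv_left_R \<alpha> (cardinal_bspline p) ((real p + 1) / 2 + real i - real j)
      + frac_deriv_right_R \<alpha> (cardinal_bspline p) ((real p + 1) / 2 + real i - real j)))"

definition R_mat :: "nat \<Rightarrow> real \<Rightarrow> nat \<Rightarrow> real Matrix.mat" where
  "R_mat p \<alpha> n = (real n powr (- \<alpha>)) \<cdot>\<^sub>m A_mat p \<alpha> n - T_mat p \<alpha> n"

end

theory Submission
  imports Defs
begin


definition tpr :: "real \<Rightarrow> real \<Rightarrow> real" where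
  "tpr r x = (if 0 < x then x powr r else 0)"

lemma tpr_cont0:
  assumes "r > 0"
  shows "(tpr r \<longlongrightarrow> 0) (at 0)"
proof (rule Lim_null_comparison)
  show "\<forall>\<^sub>F x in at 0. norm (tpr r x) \<le> \<bar>x\<bar> powr r"
    by (auto simp: tpr_def)
  show "((\<lambda>x. \<bar>x\<bar> powr r) \<longlongrightarrow> 0) (at (0::real))"
    by (rule tendsto_zero_powrI) (auto intro!: tendsto_eq_intros simp: assms)
qed

lemma tpr_deriv:
  assumes "r > 1"
  shows "(tpr r has_real_derivative r * tpr (r - 1) x) (at x)"
proof -
  consider "x > 0" | "x < 0" | "x = 0" by linarith
  then show ?thesis
  proof cases
    case 1
    have ev: "eventually (\<lambda>y. tpr r y = y powr r) (nhds x)"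
      using eventually_nhds_in_open[of "{0<..}" x] 1
      by (auto elim!: eventually_mono simp: tpr_def)
    show ?thesis
      by (subst DERIV_cong_ev[OF refl ev refl]) (use 1 has_real_derivative_powr in \<open>auto simp: tpr_def\<close>)
  next
    case 2
    have ev: "eventually (\<lambda>y. tpr r y = 0) (nhds x)"
      using eventually_nhds_in_open[of "{..<0}" x] 2
      by (auto elim!: eventually_mono simp: tpr_def)
    show ?thesis
      by (subst DERIV_cong_ev[OF refl ev refl]) (use 2 in \<open>auto simp: tpr_def\<close>)
  next
    case 3
    have "((\<lambda>y. (tpr r y - tpr r 0) / (y - 0)) \<longlongrightarrow> 0) (at 0)"
    proof -
      have "eventually (\<lambda>y. (tpr r y - tpr r 0) / (y - 0) = tpr (r - 1) y) (at 0)"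
        unfolding eventually_at_filter
        by (auto simp: tpr_def powr_diff)
      from tendsto_cong[OF this] tpr_cont0[of "r - 1"] assms show ?thesis by simp
    qed
    then show ?thesis using 3 by (simp add: has_field_derivative_iff tpr_def)
  qed
qed


definition cc :: "nat \<Rightarrow> nat \<Rightarrow> real" where
  "cc p k = (-1)^k * real (Suc p choose k) / fact p"

definition tpn :: "nat \<Rightarrow> real \<Rightarrow> real" where
  "tpn p x = (if 0 \<le> x then x^p else 0)"

lemma cc_big: "k > Suc p \<Longrightarrow> cc p k = 0"
  by (simp add: cc_def)

lemma cc_absorb: "cc p (Suc k) * real (Suc k) = - cc p k * (real p + 1 - real k)"
proof (cases "k \<le> Suc p")
  case True
  have a: "Suc k * (Suc p choose Suc k) = Suc p * (p choose k)" by (rule Suc_times_binomial)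
  have b: "(Suc p - k) * (Suc p choose k) = Suc p * (p choose k)"
    using binomial_absorb_comp[of "Suc p" k] by simp
  have "real (Suc k) * real (Suc p choose Suc k) = real (Suc p - k) * real (Suc p choose k)"
    using a b by (metis of_nat_mult)
  moreover have "real (Suc p - k) = real p + 1 - real k" using True by simp
  ultimately have e: "real (Suc k) * real (Suc p choose Suc k) = (real p + 1 - real k) * real (Suc p choose k)"
    by simp
  have e2: "(-1)^k * (real (Suc k) * real (Suc p choose Suc k)) = (-1)^k * ((real p + 1 - real k) * real (Suc p choose k))"
    using e by simp
  show ?thesis unfolding cc_def power_Suc
    using e2 by (simp del: binomial_Suc_Suc of_nat_Suc add: field_simps)
next
  case False
  then show ?thesis by (simp add: cc_big)
qed

lemma cc_pascal: "cc (Suc p) (Suc k) = (cc p (Suc k) - cc p k) / (real p + 1)"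
proof -
  have e: "real (Suc (Suc p) choose Suc k) = real (Suc p choose k) + real (Suc p choose Suc k)"
    by (simp only: binomial_Suc_Suc of_nat_add)
  show ?thesis unfolding cc_def power_Suc e fact_Suc
    by (simp del: binomial_Suc_Suc add: field_simps)
qed

lemma cc_zero: "cc (Suc p) 0 = cc p 0 / (real p + 1)"
  unfolding cc_def by (simp add: field_simps)

lemma tpn_mult: "x * tpn p x = tpn (Suc p) x"
  by (simp add: tpn_def)

lemma phi_tp:
  "cardinal_bspline p t = (\<Sum>k\<le>Suc p. cc p k * tpn p (t - real k))"
proof (induction p arbitrary: t)
  case 0
  then show ?case by (simp add: cc_def tpn_def)
next
  case (Suc p)
  define P where "P k = tpn p (t - real k)" for k
  define Q where "Q k = tpn (Suc p) (t - real k)" for k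
  have H1: "t * P k = Q k + real k * P k" for k
    using tpn_mult[of "t - real k" p] unfolding P_def Q_def by (simp add: algebra_simps)
  have H2: "(real p + 2 - t) * P (Suc k) = - Q (Suc k) + (real p + 1 - real k) * P (Suc k)" for k
    using tpn_mult[of "t - real (Suc k)" p] unfolding P_def Q_def by (simp add: algebra_simps)
  have IH1: "cardinal_bspline p t = (\<Sum>k\<le>Suc p. cc p k * P k)"
    using Suc.IH unfolding P_def by simp
  have IH2: "cardinal_bspline p (t - 1) = (\<Sum>k\<le>Suc p. cc p k * P (Suc k))"
    using Suc.IH[of "t - 1"] unfolding P_def by (simp add: algebra_simps)
  have D: "(\<Sum>k\<le>Suc p. cc p k * real k * P k) + (\<Sum>k\<le>Suc p. cc p k * (real p + 1 - real k) * P (Suc k)) = 0"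
  proof -
    have "(\<Sum>k\<le>Suc p. cc p k * real k * P k) = (\<Sum>k\<le>p. cc p (Suc k) * real (Suc k) * P (Suc k))"
      by (subst sum.atMost_Suc_shift) simp
    also have "\<dots> = - (\<Sum>k\<le>p. cc p k * (real p + 1 - real k) * P (Suc k))"
    proof -
      have "cc p (Suc k) * real (Suc k) * P (Suc k) = - (cc p k * (real p + 1 - real k) * P (Suc k))" for k
        by (simp only: cc_absorb mult_minus_left)
      then show ?thesis by (simp only: sum_negf[symmetric])
    qed
    also have "(\<Sum>k\<le>p. cc p k * (real p + 1 - real k) * P (Suc k)) = (\<Sum>k\<le>Suc p. cc p k * (real p + 1 - real k) * P (Suc k))"
      by simp
    finally show ?thesis by simp
  qed
  have L: "(real p + 1) * cardinal_bspline (Suc p) t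
      = (\<Sum>k\<le>Suc p. cc p k * Q k) - (\<Sum>k\<le>Suc p. cc p k * Q (Suc k))"
  proof -
    have "(real p + 1) * cardinal_bspline (Suc p) t
       = t * cardinal_bspline p t + (real p + 2 - t) * cardinal_bspline p (t - 1)"
    proof -
      have "cardinal_bspline (Suc p) t = (t * cardinal_bspline p t + (real p + 2 - t) * cardinal_bspline p (t - 1)) / (real p + 1)"
        by (simp add: add_divide_distrib add.commute)
      then show ?thesis by simp
    qed
    also have "\<dots> = (\<Sum>k\<le>Suc p. cc p k * (t * P k)) + (\<Sum>k\<le>Suc p. cc p k * ((real p + 2 - t) * P (Suc k)))"
      unfolding IH1 IH2 by (simp add: sum_distrib_left algebra_simps)
    also have "\<dots> = (\<Sum>k\<le>Suc p. cc p k * Q k) - (\<Sum>k\<le>Suc p. cc p k * Q (Suc k))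
        + ((\<Sum>k\<le>Suc p. cc p k * real k * P k) + (\<Sum>k\<le>Suc p. cc p k * (real p + 1 - real k) * P (Suc k)))"
      unfolding H1 H2 by (simp add: algebra_simps sum.distrib sum_subtractf)
    finally show ?thesis using D by simp
  qed
  have R: "(real p + 1) * (\<Sum>k\<le>Suc (Suc p). cc (Suc p) k * Q k)
      = (\<Sum>k\<le>Suc p. cc p k * Q k) - (\<Sum>k\<le>Suc p. cc p k * Q (Suc k))"
  proof -
    have "(\<Sum>k\<le>Suc (Suc p). cc (Suc p) k * Q k) = cc (Suc p) 0 * Q 0 + (\<Sum>k\<le>Suc p. cc (Suc p) (Suc k) * Q (Suc k))"
      by (subst sum.atMost_Suc_shift) simp
    moreover have "(\<Sum>k\<le>Suc p. cc (Suc p) (Suc k) * Q (Suc k))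
        = ((\<Sum>k\<le>Suc p. cc p (Suc k) * Q (Suc k)) - (\<Sum>k\<le>Suc p. cc p k * Q (Suc k))) / (real p + 1)"
      unfolding cc_pascal sum_subtractf[symmetric] sum_divide_distrib
      by (rule sum.cong) (auto simp: field_simps)
    ultimately have "(real p + 1) * (\<Sum>k\<le>Suc (Suc p). cc (Suc p) k * Q k)
        = cc p 0 * Q 0 + (\<Sum>k\<le>Suc p. cc p (Suc k) * Q (Suc k)) - (\<Sum>k\<le>Suc p. cc p k * Q (Suc k))"
      unfolding cc_zero by (simp add: field_simps del: sum.atMost_Suc)
    also have "cc p 0 * Q 0 + (\<Sum>k\<le>Suc p. cc p (Suc k) * Q (Suc k)) = (\<Sum>k\<le>Suc (Suc p). cc p k * Q k)"
      by (subst (2) sum.atMost_Suc_shift) simp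
    also have "\<dots> = (\<Sum>k\<le>Suc p. cc p k * Q k)"
      by (simp add: cc_big)
    finally show ?thesis .
  qed
  have "(real p + 1) * cardinal_bspline (Suc p) t = (real p + 1) * (\<Sum>k\<le>Suc (Suc p). cc (Suc p) k * Q k)"
    using L R by simp
  hence "cardinal_bspline (Suc p) t = (\<Sum>k\<le>Suc (Suc p). cc (Suc p) k * Q k)"
    by (smt (verit) mult_cancel_left of_nat_0_le_iff)
  then show ?case unfolding Q_def by simp
qed

lemma phi_zero: "t < 0 \<or> t \<ge> real p + 1 \<Longrightarrow> cardinal_bspline p t = 0"
proof (induction p arbitrary: t)
  case 0 then show ?case by auto
next
  case (Suc p)
  have "cardinal_bspline p t = 0" using Suc by auto
  moreover have "cardinal_bspline p (t - 1) = 0" using Suc.IH[of "t-1"] Suc.prems by auto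
  ultimately show ?case by simp
qed

lemma phi_sym: "p \<ge> 1 \<Longrightarrow> cardinal_bspline p (real p + 1 - t) = cardinal_bspline p t"
proof (induction p arbitrary: t rule: nat_induct_at_least)
  case base
  show ?case by (auto simp: field_simps)
next
  case (Suc p)
  have a: "cardinal_bspline p (real p + 1 - (t - 1)) = cardinal_bspline p (t - 1)" by (rule Suc.IH)
  have b: "cardinal_bspline p (real p + 1 - t) = cardinal_bspline p t" by (rule Suc.IH)
  have a': "cardinal_bspline p (real (Suc p) + 1 - t) = cardinal_bspline p (t - 1)"
    using a by (simp add: algebra_simps)
  have b': "cardinal_bspline p (real (Suc p) + 1 - t - 1) = cardinal_bspline p t"
    using b by (simp add: algebra_simps)
  show ?case by (simp only: cardinal_bspline.simps a' b') (simp add: field_simps)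
qed


lemma beta_box:
  fixes a b L k :: real
  assumes a: "a > -1" and b: "b > -1" and L: "L > 0"
  shows "((\<lambda>y. (y - k) powr a * (k + L - y) powr b) has_integral Beta (a+1) (b+1) * L powr (a+b+1)) {k..k+L}"
proof -
  define h where "h = (\<lambda>t::real. t powr a * (1 - t) powr b)"
  have hb: "(h has_integral Beta (a+1) (b+1)) (cbox 0 1)"
    using has_integral_Beta_real[of "a+1" "b+1"] a b by (simp add: h_def)
  have L1: "1 / L > 0" using L by simp
  have c1: "(0 - - k / L) /\<^sub>R (1 / L) = k" using L by simp
  have c2: "(1 - - k / L) /\<^sub>R (1 / L) = k + L" using L by (simp add: field_simps)
  have c3: "Beta (a+1) (b+1) /\<^sub>R (1 / L) ^ DIM(real) = Beta (a+1) (b+1) * L" using L by simp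
  have fx: "(\<lambda>x. h ((1 / L) *\<^sub>R x + - k / L)) = (\<lambda>x. h (x / L - k / L))" by simp
  from has_integral_affinity'[OF hb L1, of "- k / L"]
  have "((\<lambda>x. h (x / L - k / L)) has_integral Beta (a+1) (b+1) * L) {k..k+L}"
    unfolding c1 c2 c3 fx by simp
  from has_integral_mult_left[OF this, of "L powr (a+b)"]
  have i: "((\<lambda>x. h (x / L - k / L) * L powr (a+b)) has_integral Beta (a+1) (b+1) * L powr (a+b+1)) {k..k+L}"
    using L by (simp add: powr_add mult_ac)
  show ?thesis
  proof (rule has_integral_eq[OF _ i])
    fix y assume y: "y \<in> {k..k+L}"
    have e1: "y / L - k / L = (y - k) / L" by (simp add: diff_divide_distrib)
    have e2: "1 - (y - k) / L = (k + L - y) / L" using L by (simp add: field_simps)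
    show "h (y / L - k / L) * L powr (a+b) = (y - k) powr a * (k + L - y) powr b"
    proof -
      have y1: "y - k \<ge> 0" "k + L - y \<ge> 0" using y by auto
      have "h (y / L - k / L) = ((y - k) powr a / L powr a) * ((k + L - y) powr b / L powr b)"
        unfolding h_def e1 e2 using y1 L by (simp add: powr_divide)
      moreover have "L powr (a+b) = L powr a * L powr b" by (simp add: powr_add)
      moreover have "L powr a > 0" "L powr b > 0" using L by auto
      ultimately show ?thesis by (simp add: field_simps)
    qed
  qed
qed

lemma left_term:
  fixes a \<beta> t K :: real
  assumes a: "a > 0" and b: "\<beta> > -1"
  shows "((\<lambda>y. (t - y) powr \<beta> * tpr a (y - K)) has_integral Beta (a+1) (\<beta>+1) * tpr (a+1+\<beta>) (t - K)) {..t}"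
proof (cases "t > K")
  case True
  have i: "((\<lambda>y. (y - K) powr a * (K + (t - K) - y) powr \<beta>) has_integral Beta (a+1) (\<beta>+1) * (t - K) powr (a+\<beta>+1)) {K..K+(t-K)}"
    by (rule beta_box) (use a b True in auto)
  have e1: "K + (t - K) = t" by simp
  have e2: "(\<lambda>y. (y - K) powr a * (K + (t - K) - y) powr \<beta>) = (\<lambda>y. (y - K) powr a * (t - y) powr \<beta>)" by simp
  have e3: "(t - K) powr (a+\<beta>+1) = tpr (a+1+\<beta>) (t - K)" using True by (simp add: tpr_def add.commute add.left_commute)
  have "((\<lambda>y. (y - K) powr a * (t - y) powr \<beta>) has_integral Beta (a+1) (\<beta>+1) * tpr (a+1+\<beta>) (t - K)) {K..t}"
    using i unfolding e1 e2 e3 .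
  hence "((\<lambda>y. if y \<in> {K..t} then (y - K) powr a * (t - y) powr \<beta> else 0) has_integral Beta (a+1) (\<beta>+1) * tpr (a+1+\<beta>) (t - K)) {..t}"
    by (subst has_integral_restrict) auto
  then show ?thesis
  proof (rule has_integral_eq[rotated])
    fix y :: real assume yt: "y \<in> {..t}"
    show "(if y \<in> {K..t} then (y - K) powr a * (t - y) powr \<beta> else 0) = (t - y) powr \<beta> * tpr a (y - K)"
    proof (cases "y \<in> {K..t}")
      case True
      show ?thesis
      proof (cases "y = K")
        case True2: True
        then show ?thesis by (simp add: tpr_def)
      next
        case False
        then have "y > K" using True by auto
        then show ?thesis using True by (simp add: tpr_def mult.commute)
      qed
    next
      case False
      then have "y < K" using yt by auto
      then show ?thesis using False by (simp add: tpr_def)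
    qed
  qed
next
  case False
  have z: "((\<lambda>y. 0) has_integral 0) {..t}" by simp
  have "((\<lambda>y. (t - y) powr \<beta> * tpr a (y - K)) has_integral 0) {..t}"
    by (rule has_integral_eq[OF _ z]) (use False in \<open>simp add: tpr_def\<close>)
  moreover have "tpr (a+1+\<beta>) (t - K) = 0" using False by (simp add: tpr_def)
  ultimately show ?thesis by simp
qed
lemma right_term:
  fixes a \<beta> t K :: real
  assumes a: "a > 0" and b: "\<beta> > -1"
  shows "((\<lambda>y. (y - t) powr \<beta> * tpr a (K - y)) has_integral Beta (\<beta>+1) (a+1) * tpr (a+1+\<beta>) (K - t)) {t..}"
proof (cases "K > t")
  case True
  have i: "((\<lambda>y. (y - t) powr \<beta> * (t + (K - t) - y) powr a) has_integral Beta (\<beta>+1) (a+1) * (K - t) powr (\<beta>+a+1)) {t..t+(K-t)}"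
    by (rule beta_box) (use a b True in auto)
  have e1: "t + (K - t) = K" by simp
  have e2: "(\<lambda>y. (y - t) powr \<beta> * (t + (K - t) - y) powr a) = (\<lambda>y. (y - t) powr \<beta> * (K - y) powr a)" by simp
  have e3: "(K - t) powr (\<beta>+a+1) = tpr (a+1+\<beta>) (K - t)" using True by (simp add: tpr_def add.commute add.left_commute)
  have "((\<lambda>y. (y - t) powr \<beta> * (K - y) powr a) has_integral Beta (\<beta>+1) (a+1) * tpr (a+1+\<beta>) (K - t)) {t..K}"
    using i unfolding e1 e2 e3 .
  hence "((\<lambda>y. if y \<in> {t..K} then (y - t) powr \<beta> * (K - y) powr a else 0) has_integral Beta (\<beta>+1) (a+1) * tpr (a+1+\<beta>) (K - t)) {t..}"
    by (subst has_integral_restrict) auto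
  then show ?thesis
  proof (rule has_integral_eq[rotated])
    fix y :: real assume yt: "y \<in> {t..}"
    show "(if y \<in> {t..K} then (y - t) powr \<beta> * (K - y) powr a else 0) = (y - t) powr \<beta> * tpr a (K - y)"
    proof (cases "y \<in> {t..K}")
      case True
      show ?thesis
      proof (cases "y = K")
        case True2: True
        then show ?thesis by (simp add: tpr_def)
      next
        case False
        then have "y < K" using True by auto
        then show ?thesis using True by (simp add: tpr_def)
      qed
    next
      case False
      then have "y > K" using yt by auto
      then show ?thesis using False by (simp add: tpr_def)
    qed
  qed
next
  case False
  have z: "((\<lambda>y. 0) has_integral 0) {t..}" by simp
  have "((\<lambda>y. (y - t) powr \<beta> * tpr a (K - y)) has_integral 0) {t..}"
    by (rule has_integral_eq[OF _ z]) (use False in \<open>simp add: tpr_def\<close>)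
  moreover have "tpr (a+1+\<beta>) (K - t) = 0" using False by (simp add: tpr_def)
  ultimately show ?thesis by simp
qed


definition GL :: "nat \<Rightarrow> real \<Rightarrow> real \<Rightarrow> real" where
  "GL p \<beta> u = (\<Sum>k\<le>Suc p. cc p k * tpr (real p + 1 + \<beta>) (u - real k))"

lemma tpn_tpr: "p \<ge> 1 \<Longrightarrow> tpn p x = tpr (real p) x"
  by (auto simp: tpn_def tpr_def powr_realpow)

lemma tpr_scale: "n > 0 \<Longrightarrow> tpr a (n * z) = n powr a * tpr a z"
  by (auto simp: tpr_def powr_mult zero_less_mult_iff)

lemma inv_scale: "(n::real) > 0 \<Longrightarrow> A = n powr r * X \<Longrightarrow> X = n powr (-r) * A"
  by (simp add: powr_minus_divide)

lemma phi_rep_L: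
  assumes "p \<ge> 1" "n > 0"
  shows "cardinal_bspline p (n * y - s) = (\<Sum>k\<le>Suc p. cc p k * n powr real p * tpr (real p) (y - (s + real k) / n))"
proof -
  have "cardinal_bspline p (n * y - s) = (\<Sum>k\<le>Suc p. cc p k * tpn p (n * y - s - real k))"
    by (rule phi_tp)
  also have "\<dots> = (\<Sum>k\<le>Suc p. cc p k * n powr real p * tpr (real p) (y - (s + real k) / n))"
  proof (rule sum.cong[OF refl])
    fix k
    have "n * y - s - real k = n * (y - (s + real k) / n)" using assms by (simp add: field_simps)
    then show "cc p k * tpn p (n * y - s - real k) = cc p k * n powr real p * tpr (real p) (y - (s + real k) / n)"
      using assms by (simp add: tpn_tpr tpr_scale)
  qed
  finally show ?thesis .
qed

lemma phi_rep_R: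
  assumes "p \<ge> 1" "n > 0"
  shows "cardinal_bspline p (n * y - s) = (\<Sum>k\<le>Suc p. cc p k * n powr real p * tpr (real p) ((real p + 1 + s - real k) / n - y))"
proof -
  have "cardinal_bspline p (n * y - s) = cardinal_bspline p (real p + 1 - (n * y - s))"
    using phi_sym[of p "n * y - s"] assms by simp
  also have "\<dots> = (\<Sum>k\<le>Suc p. cc p k * tpn p (real p + 1 - (n * y - s) - real k))"
    by (rule phi_tp)
  also have "\<dots> = (\<Sum>k\<le>Suc p. cc p k * n powr real p * tpr (real p) ((real p + 1 + s - real k) / n - y))"
  proof (rule sum.cong[OF refl])
    fix k
    have "real p + 1 - (n * y - s) - real k = n * ((real p + 1 + s - real k) / n - y)" using assms by (simp add: field_simps)
    then show "cc p k * tpn p (real p + 1 - (n * y - s) - real k) = cc p k * n powr real p * tpr (real p) ((real p + 1 + s - real k) / n - y)"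
      using assms by (simp add: tpn_tpr tpr_scale)
  qed
  finally show ?thesis .
qed

lemma phiL:
  assumes p: "p \<ge> 1" and n: "n > 0" and b: "\<beta> > -1"
  shows "((\<lambda>y. (t - y) powr \<beta> * cardinal_bspline p (n * y - s)) has_integral
           n powr (-1 - \<beta>) * Beta (real p + 1) (\<beta> + 1) * GL p \<beta> (n * t - s)) {..t}"
proof -
  define B where "B = Beta (real p + 1) (\<beta> + 1)"
  have each: "((\<lambda>y. cc p k * n powr real p * ((t - y) powr \<beta> * tpr (real p) (y - (s + real k) / n))) has_integral
      cc p k * n powr real p * (B * tpr (real p + 1 + \<beta>) (t - (s + real k) / n))) {..t}" for k
    unfolding B_def by (rule has_integral_mult_right, rule left_term) (use p b in auto)
  have S: "((\<lambda>y. \<Sum>k\<le>Suc p. cc p k * n powr real p * ((t - y) powr \<beta> * tpr (real p) (y - (s + real k) / n))) has_integral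
      (\<Sum>k\<le>Suc p. cc p k * n powr real p * (B * tpr (real p + 1 + \<beta>) (t - (s + real k) / n)))) {..t}"
    by (rule has_integral_sum) (use each in auto)
  have val: "(\<Sum>k\<le>Suc p. cc p k * n powr real p * (B * tpr (real p + 1 + \<beta>) (t - (s + real k) / n)))
      = n powr (-1 - \<beta>) * B * GL p \<beta> (n * t - s)"
  proof -
    have "tpr (real p + 1 + \<beta>) (t - (s + real k) / n) = n powr (- (real p + 1 + \<beta>)) * tpr (real p + 1 + \<beta>) (n * t - s - real k)" for k
    proof -
      have "n * t - s - real k = n * (t - (s + real k) / n)" using n by (simp add: field_simps)
      hence "tpr (real p + 1 + \<beta>) (n * t - s - real k) = n powr (real p + 1 + \<beta>) * tpr (real p + 1 + \<beta>) (t - (s + real k) / n)"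
        using n by (simp add: tpr_scale)
      then show ?thesis using n by (rule inv_scale[rotated])
    qed
    hence "(\<Sum>k\<le>Suc p. cc p k * n powr real p * (B * tpr (real p + 1 + \<beta>) (t - (s + real k) / n)))
        = (\<Sum>k\<le>Suc p. (n powr real p * n powr (- (real p + 1 + \<beta>)) * B) * (cc p k * tpr (real p + 1 + \<beta>) (n * t - s - real k)))"
      by (simp add: mult_ac)
    also have "\<dots> = (n powr real p * n powr (- (real p + 1 + \<beta>)) * B) * GL p \<beta> (n * t - s)"
      unfolding GL_def by (simp add: sum_distrib_left algebra_simps)
    also have "n powr real p * n powr (- (real p + 1 + \<beta>)) = n powr (-1 - \<beta>)"
      by (simp add: powr_add[symmetric])
    finally show ?thesis by simp
  qed
  show ?thesis
    unfolding B_def[symmetric] val[symmetric]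
  proof (rule has_integral_eq[OF _ S])
    fix y
    show "(\<Sum>k\<le>Suc p. cc p k * n powr real p * ((t - y) powr \<beta> * tpr (real p) (y - (s + real k) / n)))
        = (t - y) powr \<beta> * cardinal_bspline p (n * y - s)"
      unfolding phi_rep_L[OF p n, of y s] sum_distrib_left
      by (rule sum.cong[OF refl]) (simp add: mult_ac)
  qed
qed

lemma phiR:
  assumes p: "p \<ge> 1" and n: "n > 0" and b: "\<beta> > -1"
  shows "((\<lambda>y. (y - t) powr \<beta> * cardinal_bspline p (n * y - s)) has_integral
           n powr (-1 - \<beta>) * Beta (\<beta> + 1) (real p + 1) * GL p \<beta> (real p + 1 - (n * t - s))) {t..}"
proof -
  define B where "B = Beta (\<beta> + 1) (real p + 1)"
  have each: "((\<lambda>y. cc p k * n powr real p * ((y - t) powr \<beta> * tpr (real p) ((real p + 1 + s - real k) / n - y))) has_integral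
      cc p k * n powr real p * (B * tpr (real p + 1 + \<beta>) ((real p + 1 + s - real k) / n - t))) {t..}" for k
    unfolding B_def by (rule has_integral_mult_right, rule right_term) (use p b in auto)
  have S: "((\<lambda>y. \<Sum>k\<le>Suc p. cc p k * n powr real p * ((y - t) powr \<beta> * tpr (real p) ((real p + 1 + s - real k) / n - y))) has_integral
      (\<Sum>k\<le>Suc p. cc p k * n powr real p * (B * tpr (real p + 1 + \<beta>) ((real p + 1 + s - real k) / n - t)))) {t..}"
    by (rule has_integral_sum) (use each in auto)
  have val: "(\<Sum>k\<le>Suc p. cc p k * n powr real p * (B * tpr (real p + 1 + \<beta>) ((real p + 1 + s - real k) / n - t)))
      = n powr (-1 - \<beta>) * B * GL p \<beta> (real p + 1 - (n * t - s))"
  proof -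
    have "tpr (real p + 1 + \<beta>) ((real p + 1 + s - real k) / n - t) = n powr (- (real p + 1 + \<beta>)) * tpr (real p + 1 + \<beta>) (real p + 1 - (n * t - s) - real k)" for k
    proof -
      have "real p + 1 - (n * t - s) - real k = n * ((real p + 1 + s - real k) / n - t)" using n by (simp add: field_simps)
      hence "tpr (real p + 1 + \<beta>) (real p + 1 - (n * t - s) - real k) = n powr (real p + 1 + \<beta>) * tpr (real p + 1 + \<beta>) ((real p + 1 + s - real k) / n - t)"
        using n by (simp add: tpr_scale)
      then show ?thesis using n by (rule inv_scale[rotated])
    qed
    hence "(\<Sum>k\<le>Suc p. cc p k * n powr real p * (B * tpr (real p + 1 + \<beta>) ((real p + 1 + s - real k) / n - t)))
        = (\<Sum>k\<le>Suc p. (n powr real p * n powr (- (real p + 1 + \<beta>)) * B) * (cc p k * tpr (real p + 1 + \<beta>) (real p + 1 - (n * t - s) - real k)))"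
      by (simp add: mult_ac)
    also have "\<dots> = (n powr real p * n powr (- (real p + 1 + \<beta>)) * B) * GL p \<beta> (real p + 1 - (n * t - s))"
      unfolding GL_def by (simp add: sum_distrib_left algebra_simps)
    also have "n powr real p * n powr (- (real p + 1 + \<beta>)) = n powr (-1 - \<beta>)"
      by (simp add: powr_add[symmetric])
    finally show ?thesis by simp
  qed
  show ?thesis
    unfolding B_def[symmetric] val[symmetric]
  proof (rule has_integral_eq[OF _ S])
    fix y
    show "(\<Sum>k\<le>Suc p. cc p k * n powr real p * ((y - t) powr \<beta> * tpr (real p) ((real p + 1 + s - real k) / n - y)))
        = (y - t) powr \<beta> * cardinal_bspline p (n * y - s)"
      unfolding phi_rep_R[OF p n, of y s] sum_distrib_left
      by (rule sum.cong[OF refl]) (simp add: mult_ac)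
  qed
qed


lemma dd_affine:
  fixes f f1 f2 :: "real \<Rightarrow> real"
  assumes d1: "\<And>x. (f has_real_derivative f1 x) (at x)"
      and d2: "\<And>x. (f1 has_real_derivative f2 x) (at x)"
  shows "deriv (deriv (\<lambda>t. C * f (m * t + c))) x = C * m * m * f2 (m * x + c)"
proof -
  have g: "((\<lambda>t. m * t + c) has_real_derivative m) (at t)" for t
    by (auto intro!: derivative_eq_intros)
  have a: "((\<lambda>t. C * f (m * t + c)) has_real_derivative C * (f1 (m * t + c) * m)) (at t)" for t
    by (rule DERIV_cmult, rule DERIV_chain2[OF d1 g])
  have e: "deriv (\<lambda>t. C * f (m * t + c)) = (\<lambda>t. C * m * f1 (m * t + c))"
    using DERIV_imp_deriv[OF a] by (auto simp: mult_ac)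
  have b: "((\<lambda>t. C * m * f1 (m * t + c)) has_real_derivative C * m * (f2 (m * x + c) * m)) (at x)"
    by (rule DERIV_cmult, rule DERIV_chain2[OF d2 g])
  show ?thesis unfolding e using DERIV_imp_deriv[OF b] by (simp add: mult_ac)
qed

definition GL1 :: "nat \<Rightarrow> real \<Rightarrow> real \<Rightarrow> real" where
  "GL1 p \<beta> u = (\<Sum>k\<le>Suc p. cc p k * ((real p + 1 + \<beta>) * tpr (real p + 1 + \<beta> - 1) (u - real k)))"

definition GL2 :: "nat \<Rightarrow> real \<Rightarrow> real \<Rightarrow> real" where
  "GL2 p \<beta> u = (\<Sum>k\<le>Suc p. cc p k * ((real p + 1 + \<beta>) * ((real p + 1 + \<beta> - 1) * tpr (real p + 1 + \<beta> - 1 - 1) (u - real k))))"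

lemma tpr_shift_deriv:
  assumes "r > 1"
  shows "((\<lambda>u. c * tpr r (u - K)) has_real_derivative c * (r * tpr (r - 1) (u - K))) (at u)"
proof -
  have g: "((\<lambda>u. u - K) has_real_derivative 1) (at u)" by (auto intro!: derivative_eq_intros)
  show ?thesis using DERIV_cmult[OF DERIV_chain2[OF tpr_deriv[OF assms] g], of c] by simp
qed

lemma GL_deriv:
  assumes "real p + 1 + \<beta> > 2"
  shows "(GL p \<beta> has_real_derivative GL1 p \<beta> u) (at u)"
  unfolding GL_def GL1_def
  by (rule DERIV_sum, rule tpr_shift_deriv) (use assms in auto)

lemma GL1_deriv:
  assumes "real p + 1 + \<beta> > 2"
  shows "(GL1 p \<beta> has_real_derivative GL2 p \<beta> u) (at u)"
  unfolding GL1_def GL2_def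
proof (rule DERIV_sum)
  fix k
  show "((\<lambda>u. cc p k * ((real p + 1 + \<beta>) * tpr (real p + 1 + \<beta> - 1) (u - real k))) has_real_derivative
     cc p k * ((real p + 1 + \<beta>) * ((real p + 1 + \<beta> - 1) * tpr (real p + 1 + \<beta> - 1 - 1) (u - real k)))) (at u)"
    using tpr_shift_deriv[of "real p + 1 + \<beta> - 1" "cc p k * (real p + 1 + \<beta>)" "real k" u] assms
    by (simp add: mult_ac)
qed


lemma knot_unif:
  assumes "n \<ge> 1" "p + 1 \<le> m" "m \<le> p + n + 1"
  shows "knot p n m = (real m - real p - 1) / real n"
  using assms unfolding knot_def by (auto simp: of_nat_diff)

lemma bspline_unif:
  assumes n: "n \<ge> 1"
  shows "p + 1 \<le> i \<Longrightarrow> i + k + 1 \<le> p + n + 1 \<Longrightarrow>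
    bspline p n k i x = cardinal_bspline k (real n * x - (real i - real p - 1))"
proof (induction k arbitrary: i)
  case 0
  have k1: "knot p n i = (real i - real p - 1) / real n" using knot_unif[OF n] 0 by simp
  have k2: "knot p n (i + 1) = (real i - real p) / real n" using knot_unif[OF n, of p "i+1"] 0 by simp
  have np: "real n > 0" using n by simp
  have "knot p n i \<le> x \<longleftrightarrow> 0 \<le> real n * x - (real i - real p - 1)"
    unfolding k1 using np by (simp add: field_simps)
  moreover have "x < knot p n (i + 1) \<longleftrightarrow> real n * x - (real i - real p - 1) < 1"
    unfolding k2 using np by (simp add: field_simps)
  ultimately show ?case by simp
next
  case (Suc k)
  define t where "t = real n * x - (real i - real p - 1)"
  have np: "real n > 0" using n by simp
  have k1: "knot p n i = (real i - real p - 1) / real n" using knot_unif[OF n] Suc.prems by simp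
  have k2: "knot p n (i + 1) = (real i - real p) / real n" using knot_unif[OF n, of p "i+1"] Suc.prems by simp
  have k3: "knot p n (i + Suc k) = (real i + real k - real p) / real n" using knot_unif[OF n, of p "i+Suc k"] Suc.prems by simp
  have k4: "knot p n (i + Suc k + 1) = (real i + real k + 1 - real p) / real n" using knot_unif[OF n, of p "i+Suc k+1"] Suc.prems by simp
  have f1: "frac0 (x - knot p n i) (knot p n (i + Suc k) - knot p n i) = t / real (Suc k)"
  proof -
    have d: "knot p n (i + Suc k) - knot p n i = (real k + 1) / real n"
      unfolding k1 k3 by (simp add: diff_divide_distrib[symmetric])
    have "(x - knot p n i) / ((real k + 1) / real n) = real n * (x - knot p n i) / (real k + 1)"
      using np by simp
    also have "real n * (x - knot p n i) = t"
      unfolding k1 t_def using np by (simp add: field_simps)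
    finally show ?thesis unfolding frac0_def d using np by simp
  qed
  have f2: "frac0 (knot p n (i + Suc k + 1) - x) (knot p n (i + Suc k + 1) - knot p n (i + 1)) = (real (Suc k) + 1 - t) / real (Suc k)"
  proof -
    have d: "knot p n (i + Suc k + 1) - knot p n (i + 1) = (real k + 1) / real n"
      unfolding k2 k4 by (simp add: diff_divide_distrib[symmetric])
    have "(knot p n (i + Suc k + 1) - x) / ((real k + 1) / real n) = real n * (knot p n (i + Suc k + 1) - x) / (real k + 1)"
      using np by simp
    also have "real n * (knot p n (i + Suc k + 1) - x) = real (Suc k) + 1 - t"
      unfolding k4 t_def using np by (simp add: field_simps)
    finally show ?thesis unfolding frac0_def d using np by simp
  qed
  have i1: "bspline p n k i x = cardinal_bspline k t"
    using Suc.IH[of i] Suc.prems unfolding t_def by simp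
  have i2: "bspline p n k (i + 1) x = cardinal_bspline k (t - 1)"
    using Suc.IH[of "i+1"] Suc.prems unfolding t_def by (simp add: algebra_simps)
  show ?case
    unfolding bspline.simps f1 f2 i1 i2 t_def[symmetric] cardinal_bspline.simps ..
qed

lemma sum_real_range: "(\<Sum>k = a + 1..a + q. real k) = real q * real a + real q * (real q + 1) / 2"
proof (induction q)
  case 0 then show ?case by simp
next
  case (Suc q)
  have "(\<Sum>k = a + 1..a + Suc q. real k) = (\<Sum>k = a + 1..a + q. real k) + real (a + Suc q)"
    by (simp add: sum.cl_ivl_Suc)
  then show ?case using Suc by (simp add: field_simps)
qed

lemma greville_unif:
  assumes n: "n \<ge> 1" and p: "p \<ge> 1" and "p + 1 \<le> i + 1" "i + p \<le> p + n + 1"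
  shows "real n * greville p n i = real i - real p - 1 + (real p + 1) / 2"
proof -
  have "(\<Sum>k = i + 1..i + p. knot p n k) = (\<Sum>k = i + 1..i + p. (real k - real p - 1) / real n)"
    by (rule sum.cong[OF refl], rule knot_unif) (use assms in auto)
  also have "\<dots> = ((\<Sum>k = i + 1..i + p. real k) - real p * (real p + 1)) / real n"
    by (simp add: sum_divide_distrib[symmetric] sum_subtractf algebra_simps)
  also have "\<dots> = (real p * real i + real p * (real p + 1) / 2 - real p * (real p + 1)) / real n"
    using sum_real_range[of i p] by (simp add: algebra_simps)
  finally have "(\<Sum>k = i + 1..i + p. knot p n k) = (real p * real i + real p * (real p + 1) / 2 - real p * (real p + 1)) / real n" .
  then show ?thesis unfolding greville_def using n p by (simp add: field_simps)
qed


fun msum :: "(nat \<Rightarrow> 'a::field mat) \<Rightarrow> nat \<Rightarrow> nat \<Rightarrow> 'a mat" where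
  "msum f d 0 = 0\<^sub>m d d"
| "msum f d (Suc m) = msum f d m + f m"

lemma msum_carrier: "(\<And>k. f k \<in> carrier_mat d d) \<Longrightarrow> msum f d m \<in> carrier_mat d d"
  by (induction m) auto

lemma msum_index: "(\<And>k. f k \<in> carrier_mat d d) \<Longrightarrow> r < d \<Longrightarrow> c < d \<Longrightarrow>
    msum f d m $$ (r, c) = (\<Sum>k<m. f k $$ (r, c))"
proof (induction m)
  case 0 then show ?case by simp
next
  case (Suc m)
  have "msum f d m \<in> carrier_mat d d" using msum_carrier Suc.prems by blast
  moreover have "f m \<in> carrier_mat d d" using Suc.prems by blast
  ultimately have "(msum f d m + f m) $$ (r, c) = msum f d m $$ (r, c) + f m $$ (r, c)"
    by (intro index_add_mat(1)) (use Suc.prems(1)[of m] Suc.prems(2,3) in auto)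
  then show ?case using Suc by simp
qed

lemma msum_rank:
  fixes f :: "nat \<Rightarrow> 'a::field mat"
  assumes "\<And>k. f k \<in> carrier_mat d d" "\<And>k. vec_space.rank d (f k) \<le> b k"
  shows "vec_space.rank d (msum f d m) \<le> (\<Sum>k<m. b k)"
proof (induction m)
  case 0 then show ?case using vec_space.rank_0I by simp
next
  case (Suc m)
  have "vec_space.rank d (msum f d m + f m) \<le> vec_space.rank d (msum f d m) + vec_space.rank d (f m)"
    by (rule vec_space.rank_subadditive) (use msum_carrier assms in auto)
  then show ?case using Suc assms(2)[of m] by simp
qed

lemma rank_sparse:
  fixes M :: "real mat"
  assumes M: "M \<in> carrier_mat d d"
    and Z: "\<And>i j. i < d \<Longrightarrow> j < d \<Longrightarrow> \<not> R i \<Longrightarrow> \<not> C j \<Longrightarrow> M $$ (i, j) = 0"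
  shows "vec_space.rank d M \<le> card {i. i < d \<and> R i} + card {j. j < d \<and> C j}"
proof -
  define E where "E k = mat d d (\<lambda>(r, c). if r = k \<and> R k then M $$ (r, c) else 0)" for k
  define F where "F k = mat d d (\<lambda>(r, c). if c = k \<and> C k \<and> \<not> R r then M $$ (r, c) else 0)" for k
  have Ec: "E k \<in> carrier_mat d d" for k unfolding E_def by simp
  have Fc: "F k \<in> carrier_mat d d" for k unfolding F_def by simp
  have Er: "vec_space.rank d (E k) \<le> (if R k then 1 else 0)" for k
  proof (cases "R k")
    case True
    have "vec_space.rank d (E k) \<le> 1"
      by (rule vec_space.rank_le_1_product_entries[of "E k" d d "\<lambda>r. if r = k then 1 else 0" "\<lambda>c. M $$ (k, c)"])
         (auto simp: E_def True)
    then show ?thesis using True by simp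
  next
    case False
    have "E k = 0\<^sub>m d d" unfolding E_def using False by (auto intro!: eq_matI)
    moreover have "vec_space.rank d (0\<^sub>m d d :: real mat) = 0" by (rule vec_space.rank_0I)
    ultimately show ?thesis using False by simp
  qed
  have Fr: "vec_space.rank d (F k) \<le> (if C k then 1 else 0)" for k
  proof (cases "C k")
    case True
    have "vec_space.rank d (F k) \<le> 1"
      by (rule vec_space.rank_le_1_product_entries[of "F k" d d "\<lambda>r. if \<not> R r then M $$ (r, k) else 0" "\<lambda>c. if c = k then 1 else 0"])
         (auto simp: F_def True)
    then show ?thesis using True by simp
  next
    case False
    have "F k = 0\<^sub>m d d" unfolding F_def using False by (auto intro!: eq_matI)
    moreover have "vec_space.rank d (0\<^sub>m d d :: real mat) = 0" by (rule vec_space.rank_0I)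
    ultimately show ?thesis using False by simp
  qed
  have mE: "msum E d d \<in> carrier_mat d d" by (rule msum_carrier) (rule Ec)
  have mF: "msum F d d \<in> carrier_mat d d" by (rule msum_carrier) (rule Fc)
  have decomp: "M = msum E d d + msum F d d"
  proof (rule eq_matI)
    fix r c assume rc: "r < dim_row (msum E d d + msum F d d)" "c < dim_col (msum E d d + msum F d d)"
    then have r: "r < d" and c: "c < d" using mF by auto
    have sE: "(\<Sum>k<d. E k $$ (r, c)) = (if R r then M $$ (r, c) else 0)"
    proof -
      have "(\<Sum>k<d. E k $$ (r, c)) = (\<Sum>k<d. if k = r then (if R r then M $$ (r, c) else 0) else 0)"
        by (rule sum.cong) (auto simp: E_def r c)
      then show ?thesis using r by (simp add: sum.delta)
    qed
    have sF: "(\<Sum>k<d. F k $$ (r, c)) = (if C c \<and> \<not> R r then M $$ (r, c) else 0)"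
    proof -
      have "(\<Sum>k<d. F k $$ (r, c)) = (\<Sum>k<d. if k = c then (if C c \<and> \<not> R r then M $$ (r, c) else 0) else 0)"
        by (rule sum.cong) (auto simp: F_def r c)
      then show ?thesis using c by (simp add: sum.delta)
    qed
    show "M $$ (r, c) = (msum E d d + msum F d d) $$ (r, c)"
      using r c mE mF msum_index[OF Ec r c] msum_index[OF Fc r c] sE sF Z[OF r c]
      by auto
  qed (use M mE mF in auto)
  have "vec_space.rank d M \<le> vec_space.rank d (msum E d d) + vec_space.rank d (msum F d d)"
    unfolding decomp by (rule vec_space.rank_subadditive) (use mE mF in auto)
  also have "\<dots> \<le> (\<Sum>k<d. if R k then 1 else 0) + (\<Sum>k<d. if C k then 1 else 0)"
  proof -
    have r1: "vec_space.rank d (msum E d d) \<le> (\<Sum>k<d. if R k then 1 else 0)"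
      by (rule msum_rank) (rule Ec, rule Er)
    have r2: "vec_space.rank d (msum F d d) \<le> (\<Sum>k<d. if C k then 1 else 0)"
      by (rule msum_rank) (rule Fc, rule Fr)
    show ?thesis using r1 r2 by linarith
  qed
  also have "(\<Sum>k<d. if R k then 1 else (0::nat)) = card {i. i < d \<and> R i}"
    by (simp add: sum.If_cases Collect_conj_eq lessThan_def Int_commute)
  also have "(\<Sum>k<d. if C k then 1 else (0::nat)) = card {i. i < d \<and> C i}"
    by (simp add: sum.If_cases Collect_conj_eq lessThan_def Int_commute)
  finally show ?thesis .
qed


lemma int_left_supp:
  fixes N :: "real \<Rightarrow> real" and t b :: real
  assumes "\<And>y. y < 0 \<Longrightarrow> N y = 0"
  shows "integral {0..t} (\<lambda>y. (t - y) powr b * N y) = integral {..t} (\<lambda>y. (t - y) powr b * N y)"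
proof -
  have "(\<lambda>y. if y \<in> {0..t} then (t - y) powr b * N y else 0) = (\<lambda>y. if y \<in> {..t} then (t - y) powr b * N y else 0)"
  proof (rule ext)
    fix y
    show "(if y \<in> {0..t} then (t - y) powr b * N y else 0) = (if y \<in> {..t} then (t - y) powr b * N y else 0)"
    proof (cases "y < 0")
      case True
      then have "N y = 0" by (rule assms)
      then show ?thesis by simp
    qed auto
  qed
  then show ?thesis
    using integral_restrict_UNIV[of "{0..t}" "\<lambda>y. (t - y) powr b * N y"]
          integral_restrict_UNIV[of "{..t}" "\<lambda>y. (t - y) powr b * N y"] by simp
qed

lemma int_right_supp:
  fixes N :: "real \<Rightarrow> real" and t b :: real
  assumes "\<And>y. y > 1 \<Longrightarrow> N y = 0"
  shows "integral {t..1} (\<lambda>y. (y - t) powr b * N y) = integral {t..} (\<lambda>y. (y - t) powr b * N y)"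
proof -
  have "(\<lambda>y. if y \<in> {t..1} then (y - t) powr b * N y else 0) = (\<lambda>y. if y \<in> {t..} then (y - t) powr b * N y else 0)"
  proof (rule ext)
    fix y
    show "(if y \<in> {t..1} then (y - t) powr b * N y else 0) = (if y \<in> {t..} then (y - t) powr b * N y else 0)"
    proof (cases "y > 1")
      case True
      then have "N y = 0" by (rule assms)
      then show ?thesis by simp
    qed auto
  qed
  then show ?thesis
    using integral_restrict_UNIV[of "{t..1}" "\<lambda>y. (y - t) powr b * N y"]
          integral_restrict_UNIV[of "{t..}" "\<lambda>y. (y - t) powr b * N y"] by simp
qed

lemma alg: "(a::real) * (k * (g * (x * bl * u) + g * (x * br * v))) = k * (g * ((a * x) * bl * u) + g * ((a * x) * br * v))"
  by (simp add: ring_distribs mult_ac)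

lemma entry_eq:
  fixes \<alpha> :: real and p n i j :: nat
  assumes a1: "1 < \<alpha>" and a2: "\<alpha> < 2" and p: "p \<ge> 2" and n: "n \<ge> 1"
    and i1: "p \<le> i + 2" and i2: "i + 1 \<le> n" and j1: "p \<le> j + 1" and j2: "j + 2 \<le> n"
  shows "real n powr (- \<alpha>) * (1 / (2 * cos (pi * \<alpha> / 2)) *
       (frac_deriv_left01 \<alpha> (bspline p n p (j + 2)) (greville p n (i + 2))
      + frac_deriv_right01 \<alpha> (bspline p n p (j + 2)) (greville p n (i + 2))))
    = 1 / (2 * cos (pi * \<alpha> / 2)) *
       (frac_deriv_left_R \<alpha> (cardinal_bspline p) ((real p + 1) / 2 + real i - real j)
      + frac_deriv_right_R \<alpha> (cardinal_bspline p) ((real p + 1) / 2 + real i - real j))"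
proof -
  define \<beta> where "\<beta> = 1 - \<alpha>"
  have b: "\<beta> > -1" using a2 unfolding \<beta>_def by simp
  have r2: "real p + 1 + \<beta> > 2" using p a2 unfolding \<beta>_def by simp
  have p1: "p \<ge> 1" using p by simp
  define nn where "nn = real n"
  have nn: "nn > 0" using n unfolding nn_def by simp
  define s where "s = real (j + 2) - real p - 1"
  define c where "c = (real p + 1) / 2 + real i - real j"
  define \<eta> where "\<eta> = greville p n (i + 2)"
  define BL where "BL = Beta (real p + 1) (\<beta> + 1)"
  define BR where "BR = Beta (\<beta> + 1) (real p + 1)"
  define C where "C = nn powr (-1 - \<beta>)"
  have s0: "s \<ge> 0" using j1 unfolding s_def by simp
  have s1: "s \<le> nn - real p - 1" using j2 unfolding s_def nn_def by simp
  have Neq: "bspline p n p (j + 2) = (\<lambda>y. cardinal_bspline p (nn * y - s))"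
  proof
    fix y
    show "bspline p n p (j + 2) y = cardinal_bspline p (nn * y - s)"
      using bspline_unif[OF n, of p "j + 2" p y] j1 j2 unfolding nn_def s_def by simp
  qed
  have eta: "nn * \<eta> - s = c"
    using greville_unif[OF n p1, of "i + 2"] i1 i2 unfolding nn_def \<eta>_def s_def c_def
    by (simp add: field_simps)
  have dGL: "\<And>x. (GL p \<beta> has_real_derivative GL1 p \<beta> x) (at x)" using GL_deriv[OF r2] .
  have dGL1: "\<And>x. (GL1 p \<beta> has_real_derivative GL2 p \<beta> x) (at x)" using GL1_deriv[OF r2] .
  have FL: "(\<lambda>t. integral {0..t} (\<lambda>y. (t - y) powr (1 - \<alpha>) * bspline p n p (j + 2) y))
      = (\<lambda>t. (C * BL) * GL p \<beta> (nn * t + - s))"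
  proof
    fix t
    have "integral {0..t} (\<lambda>y. (t - y) powr \<beta> * cardinal_bspline p (nn * y - s))
        = integral {..t} (\<lambda>y. (t - y) powr \<beta> * cardinal_bspline p (nn * y - s))"
    proof (rule int_left_supp)
      fix y :: real assume y: "y < 0"
      have "nn * y < 0" using y nn by (simp add: mult_pos_neg)
      then have "nn * y - s < 0" using s0 by simp
      then show "cardinal_bspline p (nn * y - s) = 0" by (intro phi_zero) simp
    qed
    also have "\<dots> = C * BL * GL p \<beta> (nn * t - s)"
      unfolding C_def BL_def by (rule integral_unique, rule phiL[OF p1 nn b])
    finally show "integral {0..t} (\<lambda>y. (t - y) powr (1 - \<alpha>) * bspline p n p (j + 2) y) = (C * BL) * GL p \<beta> (nn * t + - s)"
      unfolding Neq \<beta>_def[symmetric] by simp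
  qed
  have AL: "frac_deriv_left01 \<alpha> (bspline p n p (j + 2)) \<eta> = 1 / Gamma (2 - \<alpha>) * (C * BL * nn * nn * GL2 p \<beta> c)"
    unfolding frac_deriv_left01_def FL dd_affine[OF dGL dGL1] eta[symmetric] by simp
  have FR: "(\<lambda>t. integral {t..1} (\<lambda>y. (y - t) powr (1 - \<alpha>) * bspline p n p (j + 2) y))
      = (\<lambda>t. (C * BR) * GL p \<beta> ((- nn) * t + (real p + 1 + s)))"
  proof
    fix t
    have "integral {t..1} (\<lambda>y. (y - t) powr \<beta> * cardinal_bspline p (nn * y - s))
        = integral {t..} (\<lambda>y. (y - t) powr \<beta> * cardinal_bspline p (nn * y - s))"
    proof (rule int_right_supp)
      fix y :: real assume y: "y > 1"
      have "nn * y > nn * 1" using y nn by simp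
      then have "nn * y - s \<ge> real p + 1" using s1 by simp
      then show "cardinal_bspline p (nn * y - s) = 0" by (intro phi_zero) simp
    qed
    also have "\<dots> = C * BR * GL p \<beta> (real p + 1 - (nn * t - s))"
      unfolding C_def BR_def by (rule integral_unique, rule phiR[OF p1 nn b])
    finally show "integral {t..1} (\<lambda>y. (y - t) powr (1 - \<alpha>) * bspline p n p (j + 2) y) = (C * BR) * GL p \<beta> ((- nn) * t + (real p + 1 + s))"
      unfolding Neq \<beta>_def[symmetric] by (simp add: algebra_simps)
  qed
  have AR: "frac_deriv_right01 \<alpha> (bspline p n p (j + 2)) \<eta> = 1 / Gamma (2 - \<alpha>) * (C * BR * nn * nn * GL2 p \<beta> (real p + 1 - c))"
  proof -
    have e: "(- nn) * \<eta> + (real p + 1 + s) = real p + 1 - c" using eta by (simp add: algebra_simps)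
    show ?thesis
      unfolding frac_deriv_right01_def FR dd_affine[OF dGL dGL1] e by simp
  qed
  have TL: "(\<lambda>t. integral {..t} (\<lambda>y. (t - y) powr (1 - \<alpha>) * cardinal_bspline p y)) = (\<lambda>t. BL * GL p \<beta> (1 * t + 0))"
  proof
    fix t
    have "integral {..t} (\<lambda>y. (t - y) powr \<beta> * cardinal_bspline p (1 * y - 0)) = 1 powr (-1 - \<beta>) * BL * GL p \<beta> (1 * t - 0)"
      unfolding BL_def by (rule integral_unique, rule phiL[OF p1 _ b]) simp
    then show "integral {..t} (\<lambda>y. (t - y) powr (1 - \<alpha>) * cardinal_bspline p y) = BL * GL p \<beta> (1 * t + 0)"
      unfolding \<beta>_def by simp
  qed
  have TR: "(\<lambda>t. integral {t..} (\<lambda>y. (y - t) powr (1 - \<alpha>) * cardinal_bspline p y)) = (\<lambda>t. BR * GL p \<beta> ((-1) * t + (real p + 1)))"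
  proof
    fix t
    have "integral {t..} (\<lambda>y. (y - t) powr \<beta> * cardinal_bspline p (1 * y - 0)) = 1 powr (-1 - \<beta>) * BR * GL p \<beta> (real p + 1 - (1 * t - 0))"
      unfolding BR_def by (rule integral_unique, rule phiR[OF p1 _ b]) simp
    then show "integral {t..} (\<lambda>y. (y - t) powr (1 - \<alpha>) * cardinal_bspline p y) = BR * GL p \<beta> ((-1) * t + (real p + 1))"
      unfolding \<beta>_def by simp
  qed
  have TLv: "frac_deriv_left_R \<alpha> (cardinal_bspline p) c = 1 / Gamma (2 - \<alpha>) * (BL * GL2 p \<beta> c)"
    unfolding frac_deriv_left_R_def TL dd_affine[OF dGL dGL1] by simp
  have TRv: "frac_deriv_right_R \<alpha> (cardinal_bspline p) c = 1 / Gamma (2 - \<alpha>) * (BR * GL2 p \<beta> (real p + 1 - c))"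
    unfolding frac_deriv_right_R_def TR dd_affine[OF dGL dGL1] by simp
  have key: "nn powr (- \<alpha>) * (C * nn * nn) = 1"
  proof -
    have C2: "C = nn powr (\<alpha> - 2)" unfolding C_def \<beta>_def by (simp add: algebra_simps)
    have "nn powr (\<alpha> - 2) * nn powr 1 * nn powr 1 = nn powr (\<alpha> - 2 + 1 + 1)" by (simp only: powr_add)
    hence "nn powr \<alpha> = nn powr (\<alpha> - 2) * nn powr 1 * nn powr 1" by simp
    hence "C * nn * nn = nn powr \<alpha>" unfolding C2 using nn by simp
    then show ?thesis using nn by (simp add: powr_add[symmetric])
  qed
  have AL': "frac_deriv_left01 \<alpha> (bspline p n p (j + 2)) \<eta> = 1 / Gamma (2 - \<alpha>) * ((C * nn * nn) * BL * GL2 p \<beta> c)"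
    unfolding AL by (simp only: mult_ac)
  have AR': "frac_deriv_right01 \<alpha> (bspline p n p (j + 2)) \<eta> = 1 / Gamma (2 - \<alpha>) * ((C * nn * nn) * BR * GL2 p \<beta> (real p + 1 - c))"
    unfolding AR by (simp only: mult_ac)
  have "nn powr (- \<alpha>) * (1 / (2 * cos (pi * \<alpha> / 2)) * (frac_deriv_left01 \<alpha> (bspline p n p (j + 2)) \<eta> + frac_deriv_right01 \<alpha> (bspline p n p (j + 2)) \<eta>))
      = 1 / (2 * cos (pi * \<alpha> / 2)) * (1 / Gamma (2 - \<alpha>) * ((nn powr (- \<alpha>) * (C * nn * nn)) * BL * GL2 p \<beta> c)
          + 1 / Gamma (2 - \<alpha>) * ((nn powr (- \<alpha>) * (C * nn * nn)) * BR * GL2 p \<beta> (real p + 1 - c)))"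
    unfolding AL' AR' by (rule alg)
  also have "\<dots> = 1 / (2 * cos (pi * \<alpha> / 2)) * (frac_deriv_left_R \<alpha> (cardinal_bspline p) c + frac_deriv_right_R \<alpha> (cardinal_bspline p) c)"
    unfolding key TLv TRv by (simp only: mult_1)
  finally show ?thesis by (simp only: nn_def \<eta>_def c_def)
qed


theorem mainTheorem13:
  fixes \<alpha> :: real and p n :: nat
  assumes "1 < \<alpha>" and "\<alpha> < 2" and "p \<ge> 2" and "n \<ge> 1"
  shows "vec_space.rank (n + p - 2) (R_mat p \<alpha> n) \<le> 4 * (p - 1)"
proof -
  define d where "d = n + p - 2"
  define RR where "RR i = (\<not> (p \<le> i + 2 \<and> i + 1 \<le> n))" for i
  define CC where "CC j = (\<not> (p \<le> j + 1 \<and> j + 2 \<le> n))" for j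
  have carr: "R_mat p \<alpha> n \<in> carrier_mat d d"
    unfolding R_mat_def d_def by (rule minus_carrier_mat) (simp add: T_mat_def)
  have Z: "R_mat p \<alpha> n $$ (i, j) = 0" if i: "i < d" and j: "j < d" and ri: "\<not> RR i" and cj: "\<not> CC j" for i j
  proof -
    have e: "R_mat p \<alpha> n $$ (i, j) = real n powr (- \<alpha>) * (A_mat p \<alpha> n $$ (i, j)) - T_mat p \<alpha> n $$ (i, j)"
      unfolding R_mat_def using i j unfolding d_def by (simp add: A_mat_def T_mat_def)
    have "real n powr (- \<alpha>) * (A_mat p \<alpha> n $$ (i, j)) = T_mat p \<alpha> n $$ (i, j)"
      unfolding A_mat_def T_mat_def using i j unfolding d_def
      using entry_eq[OF assms, of i j] ri cj unfolding RR_def CC_def by simp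
    then show ?thesis using e by simp
  qed
  have "vec_space.rank d (R_mat p \<alpha> n) \<le> card {i. i < d \<and> RR i} + card {j. j < d \<and> CC j}"
    by (rule rank_sparse[OF carr]) (use Z in blast)
  also have "card {i. i < d \<and> RR i} \<le> 2 * (p - 1)"
  proof -
    have "{i. i < d \<and> RR i} \<subseteq> {..<p - 2} \<union> {n..<d}"
      unfolding RR_def using assms by auto
    then have "card {i. i < d \<and> RR i} \<le> card ({..<p - 2} \<union> {n..<d})"
      by (intro card_mono) auto
    also have "\<dots> \<le> card {..<p - 2} + card {n..<d}" by (rule card_Un_le)
    also have "\<dots> \<le> 2 * (p - 1)" unfolding d_def using assms by simp
    finally show ?thesis .
  qed
  also have "card {j. j < d \<and> CC j} \<le> 2 * (p - 1)"
  proof -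
    have "{j. j < d \<and> CC j} \<subseteq> {..<p - 1} \<union> {n - 1..<d}"
      unfolding CC_def using assms by auto
    then have "card {j. j < d \<and> CC j} \<le> card ({..<p - 1} \<union> {n - 1..<d})"
      by (intro card_mono) auto
    also have "\<dots> \<le> card {..<p - 1} + card {n - 1..<d}" by (rule card_Un_le)
    also have "\<dots> \<le> 2 * (p - 1)" unfolding d_def using assms by simp
    finally show ?thesis .
  qed
  finally show ?thesis unfolding d_def by simp
qed

end
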